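(* Let $M$ be a right $R$-module which is an internal direct sum $M=\bigoplus_{n\in\mathbb{N}}M_n$ of countably many nonzero submodules $M_n$, and let $S=\mathrm{End}(M_R)$, so that $M$ is a left $S$-module. Then ${}_SM$ is not an $\aleph_0$-injective left $S$-module.
   Context: A left $S$-module $N$ is $\aleph_0$-injective if for every countably generated left ideal $J$ of $S$ and every $S$-homomorphism $f:J\to N$ there is an $S$-homomorphism $\bar f:S\to N$ with $\bar f|_J=f$. *)

theory Defs
  imports Main "HOL-Library.Countable_Set"
begin

definition right_module :: "('m::ab_group_add \<Rightarrow> 'r::ring_1 \<Rightarrow> 'm) \<Rightarrow> bool" where
  "right_module smul \<longleftrightarrow>
     (\<forall>x y r. smul (x + y) r = smul x r + smul y r) \<and>
     (\<forall>x r s. smul x (r + s) = smul x r + smul x s) \<and>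
     (\<forall>x r s. smul x (r * s) = smul (smul x r) s) \<and>
     (\<forall>x. smul x 1 = x)"

definition submodule :: "('m::ab_group_add \<Rightarrow> 'r::ring_1 \<Rightarrow> 'm) \<Rightarrow> 'm set \<Rightarrow> bool" where
  "submodule smul N \<longleftrightarrow> 0 \<in> N \<and> (\<forall>x\<in>N. \<forall>y\<in>N. x + y \<in> N) \<and> (\<forall>x\<in>N. - x \<in> N)
     \<and> (\<forall>x\<in>N. \<forall>r. smul x r \<in> N)"

text \<open>M (= the whole type 'm) is the internal direct sum of the submodules Mn n:
every element is uniquely a finite sum of elements of the Mn n.\<close>
definition internal_direct_sum :: "('m::ab_group_add \<Rightarrow> 'r::ring_1 \<Rightarrow> 'm) \<Rightarrow> (nat \<Rightarrow> 'm set) \<Rightarrow> bool" where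
  "internal_direct_sum smul Mn \<longleftrightarrow>
     (\<forall>n. submodule smul (Mn n)) \<and>
     (\<forall>x. \<exists>!c. finite {n. c n \<noteq> 0} \<and> (\<forall>n. c n \<in> Mn n) \<and> x = sum c {n. c n \<noteq> 0})"

text \<open>S = End(M_R): the R-linear endomorphisms of M. Multiplication in S is
composition, so M is a left S-module via s \<cdot> m = s m.\<close>
definition End_R :: "('m::ab_group_add \<Rightarrow> 'r::ring_1 \<Rightarrow> 'm) \<Rightarrow> ('m \<Rightarrow> 'm) set" where
  "End_R smul = {f. (\<forall>x y. f (x + y) = f x + f y) \<and> (\<forall>x r. f (smul x r) = smul (f x) r)}"

definition left_ideal_End :: "('m::ab_group_add \<Rightarrow> 'r::ring_1 \<Rightarrow> 'm) \<Rightarrow> ('m \<Rightarrow> 'm) set \<Rightarrow> bool" where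
  "left_ideal_End smul J \<longleftrightarrow> J \<subseteq> End_R smul \<and> (\<lambda>_. 0) \<in> J
     \<and> (\<forall>a\<in>J. \<forall>b\<in>J. (\<lambda>x. a x + b x) \<in> J) \<and> (\<forall>a\<in>J. (\<lambda>x. - a x) \<in> J)
     \<and> (\<forall>s\<in>End_R smul. \<forall>a\<in>J. s \<circ> a \<in> J)"

definition left_ideal_gen_End :: "('m::ab_group_add \<Rightarrow> 'r::ring_1 \<Rightarrow> 'm) \<Rightarrow> ('m \<Rightarrow> 'm) set \<Rightarrow> ('m \<Rightarrow> 'm) set" where
  "left_ideal_gen_End smul X = \<Inter>{J. left_ideal_End smul J \<and> X \<subseteq> J}"

definition countably_generated_left_ideal_End :: "('m::ab_group_add \<Rightarrow> 'r::ring_1 \<Rightarrow> 'm) \<Rightarrow> ('m \<Rightarrow> 'm) set \<Rightarrow> bool" where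
  "countably_generated_left_ideal_End smul J \<longleftrightarrow> left_ideal_End smul J \<and>
     (\<exists>X. countable X \<and> X \<subseteq> End_R smul \<and> J = left_ideal_gen_End smul X)"

text \<open>An S-homomorphism from a left ideal J of S to the left S-module M (values off J irrelevant).\<close>
definition S_hom_on :: "('m::ab_group_add \<Rightarrow> 'r::ring_1 \<Rightarrow> 'm) \<Rightarrow> ('m \<Rightarrow> 'm) set \<Rightarrow> (('m \<Rightarrow> 'm) \<Rightarrow> 'm) \<Rightarrow> bool" where
  "S_hom_on smul J f \<longleftrightarrow>
     (\<forall>a\<in>J. \<forall>b\<in>J. f (\<lambda>x. a x + b x) = f a + f b) \<and>
     (\<forall>s\<in>End_R smul. \<forall>a\<in>J. f (s \<circ> a) = s (f a))"

definition aleph0_injective_over_End :: "('m::ab_group_add \<Rightarrow> 'r::ring_1 \<Rightarrow> 'm) \<Rightarrow> bool" where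
  "aleph0_injective_over_End smul \<longleftrightarrow>
     (\<forall>J f. countably_generated_left_ideal_End smul J \<and> S_hom_on smul J f \<longrightarrow>
        (\<exists>g. S_hom_on smul (End_R smul) g \<and> (\<forall>a\<in>J. g a = f a)))"

end

theory Submission
  imports Defs
begin

definition dec :: "(nat \<Rightarrow> 'm::ab_group_add set) \<Rightarrow> 'm \<Rightarrow> nat \<Rightarrow> 'm" where
  "dec Mn x = (THE c. finite {n. c n \<noteq> 0} \<and> (\<forall>n. c n \<in> Mn n) \<and> x = sum c {n. c n \<noteq> 0})"

lemma sum_supp:
  assumes "finite F" "{n. c n \<noteq> 0} \<subseteq> F"
  shows "sum c F = sum c {n. (c n :: 'a::comm_monoid_add) \<noteq> 0}"
  by (rule sum.mono_neutral_right) (use assms in auto)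

lemma add_hom_0:
  fixes s :: "'a::ab_group_add \<Rightarrow> 'b::ab_group_add"
  assumes "\<forall>x y. s (x + y) = s x + s y"
  shows "s 0 = 0"
proof -
  have "s 0 = s 0 + s 0" using assms by (metis add_0)
  then show ?thesis by simp
qed

lemma add_hom_sum:
  fixes s :: "'a::ab_group_add \<Rightarrow> 'b::ab_group_add"
  assumes "\<forall>x y. s (x + y) = s x + s y"
  shows "s (sum g F) = sum (\<lambda>i. s (g i)) F"
proof (induction F rule: infinite_finite_induct)
  case (infinite A) then show ?case using add_hom_0[OF assms] by simp
next
  case empty then show ?case using add_hom_0[OF assms] by simp
next
  case (insert x F) then show ?case using assms by simp
qed

lemma dec_props:
  assumes "internal_direct_sum smul Mn"
  shows "finite {n. dec Mn x n \<noteq> 0} \<and> (\<forall>n. dec Mn x n \<in> Mn n) \<and> x = sum (dec Mn x) {n. dec Mn x n \<noteq> 0}"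
proof -
  from assms have "\<exists>!c. finite {n. c n \<noteq> 0} \<and> (\<forall>n. c n \<in> Mn n) \<and> x = sum c {n. c n \<noteq> 0}"
    unfolding internal_direct_sum_def by blast
  then show ?thesis unfolding dec_def by (rule theI')
qed

lemma dec_unique:
  assumes "internal_direct_sum smul Mn" "finite F" "{n. c n \<noteq> 0} \<subseteq> F"
    "\<forall>n. c n \<in> Mn n" "x = sum c F"
  shows "dec Mn x = c"
proof -
  from assms(1) have u: "\<exists>!c. finite {n. c n \<noteq> 0} \<and> (\<forall>n. c n \<in> Mn n) \<and> x = sum c {n. c n \<noteq> 0}"
    unfolding internal_direct_sum_def by blast
  have "finite {n. c n \<noteq> 0}" using assms finite_subset by blast
  moreover have "x = sum c {n. c n \<noteq> 0}" using sum_supp[OF assms(2,3)] assms(5) by simp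
  ultimately show ?thesis unfolding dec_def using the1_equality[OF u] assms(4) by blast
qed

lemma smul_props:
  assumes "right_module smul"
  shows "smul 0 r = 0" "smul (sum g F) r = sum (\<lambda>i. smul (g i) r) F"
proof -
  have h: "\<forall>x y. (\<lambda>x. smul x r) (x + y) = (\<lambda>x. smul x r) x + (\<lambda>x. smul x r) y"
    using assms unfolding right_module_def by blast
  show "smul 0 r = 0" using add_hom_0[OF h] by simp
  show "smul (sum g F) r = sum (\<lambda>i. smul (g i) r) F" using add_hom_sum[OF h] by simp
qed

lemma dec_add:
  assumes "internal_direct_sum smul Mn"
  shows "dec Mn (x + y) = (\<lambda>n. dec Mn x n + dec Mn y n)"
proof (rule dec_unique[OF assms])
  let ?F = "{n. dec Mn x n \<noteq> 0} \<union> {n. dec Mn y n \<noteq> 0}"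
  show "finite ?F" using dec_props[OF assms] by blast
  show "{n. dec Mn x n + dec Mn y n \<noteq> 0} \<subseteq> ?F" by auto
  show "\<forall>n. dec Mn x n + dec Mn y n \<in> Mn n"
    using dec_props[OF assms] assms unfolding internal_direct_sum_def submodule_def by blast
  have "x = sum (dec Mn x) ?F"
    using dec_props[OF assms, of x] sum_supp[of ?F "dec Mn x"] dec_props[OF assms, of y] by auto
  moreover have "y = sum (dec Mn y) ?F"
    using dec_props[OF assms, of x] sum_supp[of ?F "dec Mn y"] dec_props[OF assms, of y] by auto
  ultimately show "x + y = (\<Sum>n\<in>?F. dec Mn x n + dec Mn y n)"
    by (simp add: sum.distrib)
qed

lemma dec_smul:
  assumes "internal_direct_sum smul Mn" "right_module smul"
  shows "dec Mn (smul x r) = (\<lambda>n. smul (dec Mn x n) r)"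
proof (rule dec_unique[OF assms(1)])
  let ?F = "{n. dec Mn x n \<noteq> 0}"
  show "finite ?F" using dec_props[OF assms(1)] by blast
  show "{n. smul (dec Mn x n) r \<noteq> 0} \<subseteq> ?F" using smul_props(1)[OF assms(2)] by auto
  show "\<forall>n. smul (dec Mn x n) r \<in> Mn n"
    using dec_props[OF assms(1)] assms(1) unfolding internal_direct_sum_def submodule_def by blast
  show "smul x r = (\<Sum>n\<in>?F. smul (dec Mn x n) r)"
    using dec_props[OF assms(1), of x] smul_props(2)[OF assms(2)] by metis
qed

lemma dec_single:
  assumes "internal_direct_sum smul Mn" "x \<in> Mn k"
  shows "dec Mn x = (\<lambda>n. if n = k then x else 0)"
proof (rule dec_unique[OF assms(1), of "{k}"])
  show "\<forall>n. (if n = k then x else 0) \<in> Mn n"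
    using assms unfolding internal_direct_sum_def submodule_def by auto
qed auto

lemma proj_End:
  assumes "internal_direct_sum smul Mn" "right_module smul"
  shows "(\<lambda>x. dec Mn x n) \<in> End_R smul"
  unfolding End_R_def using dec_add[OF assms(1)] dec_smul[OF assms] by simp

lemma End_R_add: "s \<in> End_R smul \<Longrightarrow> \<forall>x y. s (x + y) = s x + s y"
  unfolding End_R_def by blast

lemma smul_neg: assumes "right_module smul" shows "smul (- x) r = - smul x r"
proof -
  have "smul (- x) r + smul x r = 0" using assms smul_props(1)[OF assms]
    unfolding right_module_def by (metis left_minus)
  then show ?thesis by (simp add: eq_neg_iff_add_eq_0)
qed
lemma EE: assumes "right_module smul" shows "left_ideal_End smul (End_R smul)"
  unfolding left_ideal_End_def
proof (intro conjI ballI)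
  show "(\<lambda>_. 0) \<in> End_R smul" unfolding End_R_def using smul_props(1)[OF assms] by simp
  fix a assume a: "a \<in> End_R smul"
  show "(\<lambda>x. - a x) \<in> End_R smul" using a smul_neg[OF assms] unfolding End_R_def by simp
  { fix b assume b: "b \<in> End_R smul"
    show "(\<lambda>x. a x + b x) \<in> End_R smul" using a b assms unfolding End_R_def right_module_def
      by (simp add: algebra_simps) }
  { fix s assume s: "s \<in> End_R smul"
    show "s \<circ> a \<in> End_R smul" using a s unfolding End_R_def by simp }
qed simp
lemma gen_ideal: assumes "right_module smul" "X \<subseteq> End_R smul"
  shows "left_ideal_End smul (left_ideal_gen_End smul X)"
  using EE[OF assms(1)] assms(2)
  unfolding left_ideal_gen_End_def left_ideal_End_def
  apply (intro conjI)
  apply blast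
  apply blast
  apply (intro ballI; simp; blast)
  apply (intro ballI; simp; blast)
  apply (intro ballI; simp; blast)
  done

theorem mainTheorem19:
  fixes smul :: "'m::ab_group_add \<Rightarrow> 'r::ring_1 \<Rightarrow> 'm"
    and Mn :: "nat \<Rightarrow> 'm set"
  assumes "right_module smul"
    and "internal_direct_sum smul Mn"
    and "\<forall>n. Mn n \<noteq> {0}"
  shows "\<not> aleph0_injective_over_End smul"
proof
  assume inj: "aleph0_injective_over_End smul"
  have "\<forall>n. \<exists>x. x \<in> Mn n \<and> x \<noteq> 0"
  proof
    fix n
    have "0 \<in> Mn n" using assms(2) unfolding internal_direct_sum_def submodule_def by blast
    then show "\<exists>x. x \<in> Mn n \<and> x \<noteq> 0" using assms(3) by blast
  qed
  then obtain xs where xs: "\<And>n. xs n \<in> Mn n" "\<And>n. xs n \<noteq> 0" by metis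
  define e where "e n = (\<lambda>x. dec Mn x n)" for n
  have eE: "e n \<in> End_R smul" for n unfolding e_def by (rule proj_End[OF assms(2,1)])
  have exs: "e n (xs k) = (if n = k then xs k else 0)" for n k
    unfolding e_def using dec_single[OF assms(2) xs(1)] by simp
  define X where "X = range e"
  define J where "J = left_ideal_gen_End smul X"
  define J' where "J' = {a \<in> End_R smul. finite {n. a (xs n) \<noteq> 0}}"
  have EE: "left_ideal_End smul (End_R smul)"
    by (rule EE[OF assms(1)])
  have XE: "X \<subseteq> End_R smul" unfolding X_def using eE by auto
  have J'id: "left_ideal_End smul J'"
    unfolding left_ideal_End_def
  proof (intro conjI ballI)
    show "J' \<subseteq> End_R smul" unfolding J'_def by auto
    show "(\<lambda>_. 0) \<in> J'" unfolding J'_def using EE unfolding left_ideal_End_def by auto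
    fix a assume a: "a \<in> J'"
    then have aE: "a \<in> End_R smul" and af: "finite {n. a (xs n) \<noteq> 0}" unfolding J'_def by auto
    show "(\<lambda>x. - a x) \<in> J'" using aE af EE unfolding J'_def left_ideal_End_def by auto
    { fix b assume "b \<in> J'"
      then have bE: "b \<in> End_R smul" and bf: "finite {n. b (xs n) \<noteq> 0}" unfolding J'_def by auto
      have "{n. a (xs n) + b (xs n) \<noteq> 0} \<subseteq> {n. a (xs n) \<noteq> 0} \<union> {n. b (xs n) \<noteq> 0}" by auto
      then show "(\<lambda>x. a x + b x) \<in> J'" using aE bE af bf EE finite_subset
        unfolding J'_def left_ideal_End_def by (auto intro: finite_subset) }
    { fix s assume sE: "s \<in> End_R smul"
      have "{n. s (a (xs n)) \<noteq> 0} \<subseteq> {n. a (xs n) \<noteq> 0}"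
        using add_hom_0[OF End_R_add[OF sE]] by auto
      then show "s \<circ> a \<in> J'" using aE af sE EE
        unfolding J'_def left_ideal_End_def by (auto intro: finite_subset) }
  qed
  have XJ': "X \<subseteq> J'"
    unfolding X_def J'_def using eE exs by (auto intro: finite_subset[of _ "{_}"])
  have JJ': "J \<subseteq> J'" unfolding J_def left_ideal_gen_End_def using J'id XJ' by blast
  have XJ: "X \<subseteq> J" unfolding J_def left_ideal_gen_End_def by blast
  have Jid: "left_ideal_End smul J" unfolding J_def by (rule gen_ideal[OF assms(1) XE])
  have cg: "countably_generated_left_ideal_End smul J"
    unfolding countably_generated_left_ideal_End_def
  proof (intro conjI exI[of _ X])
    show "countable X" unfolding X_def by simp
  qed (use Jid XE J_def in auto)
  define f where "f a = sum (\<lambda>n. a (xs n)) {n. a (xs n) \<noteq> 0}" for a :: "'m \<Rightarrow> 'm"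
  have fF: "f a = sum (\<lambda>n. a (xs n)) F" if "finite F" "{n. a (xs n) \<noteq> 0} \<subseteq> F" for a F
    unfolding f_def using sum_supp[OF that] by simp
  have fin: "finite {n. a (xs n) \<noteq> 0}" if "a \<in> J" for a
    using that JJ' unfolding J'_def by blast
  have JE: "J \<subseteq> End_R smul" using Jid unfolding left_ideal_End_def by blast
  have hom: "S_hom_on smul J f"
    unfolding S_hom_on_def
  proof (intro conjI ballI)
    fix a b assume a: "a \<in> J" and b: "b \<in> J"
    let ?F = "{n. a (xs n) \<noteq> 0} \<union> {n. b (xs n) \<noteq> 0}"
    have "finite ?F" using fin a b by auto
    moreover have "{n. a (xs n) + b (xs n) \<noteq> 0} \<subseteq> ?F" by auto
    ultimately show "f (\<lambda>x. a x + b x) = f a + f b"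
      using fF[of ?F a] fF[of ?F b] fF[of ?F "\<lambda>x. a x + b x"] by (auto simp: sum.distrib)
  next
    fix s a assume s: "s \<in> End_R smul" and a: "a \<in> J"
    have "{n. (s \<circ> a) (xs n) \<noteq> 0} \<subseteq> {n. a (xs n) \<noteq> 0}"
      using add_hom_0[OF End_R_add[OF s]] by auto
    then have "f (s \<circ> a) = sum (\<lambda>n. s (a (xs n))) {n. a (xs n) \<noteq> 0}"
      using fF[of _ "s \<circ> a"] fin[OF a] by simp
    also have "\<dots> = s (f a)" unfolding f_def using add_hom_sum[OF End_R_add[OF s]] by metis
    finally show "f (s \<circ> a) = s (f a)" .
  qed
  obtain g where g: "S_hom_on smul (End_R smul) g" "\<forall>a\<in>J. g a = f a"
    using inj cg hom unfolding aleph0_injective_over_End_def by blast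
  have idE: "id \<in> End_R smul" unfolding End_R_def by simp
  define m where "m = g id"
  have gs: "g s = s m" if "s \<in> End_R smul" for s
    using g(1) that idE unfolding S_hom_on_def m_def by (metis comp_id)
  have "e n m = xs n" for n
  proof -
    have "e n \<in> J" using XJ X_def by auto
    then have "e n m = f (e n)" using gs[OF eE, of n] g(2) by metis
    also have "\<dots> = sum (\<lambda>k. e n (xs k)) {n}" using fF[of "{n}" "e n"] exs by (simp add: subset_iff)
    finally show ?thesis using exs by simp
  qed
  then have "{k. dec Mn m k \<noteq> 0} = UNIV" using xs(2) unfolding e_def by auto
  then show False using dec_props[OF assms(2), of m] by simp
qed

end
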